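(* Let $a,\alpha\in\mathbb R$, $\Delta t>0$, $h_x,h_y>0$ and $N_x,N_y\ge1$. Grid functions are arrays $(f_{ij})_{1\le i\le N_x,1\le j\le N_y}$ (values at cell centers $((i-\tfrac12)h_x,(j-\tfrac12)h_y)$), with discrete inner product $\langle f,g\rangle=h_xh_y\sum_{i,j}f_{ij}g_{ij}$. Let $\nabla_h^2=\Delta_h$ be the cell-centered discrete Laplacian with homogeneous Neumann boundary conditions, $$(\Delta_h\phi)_{ij}=\frac{\phi_{i+1,j}-2\phi_{ij}+\phi_{i-1,j}}{h_x^2}+\frac{\phi_{i,j+1}-2\phi_{ij}+\phi_{i,j-1}}{h_y^2},$$ with ghost values $\phi_{0,j}=\phi_{1,j}$, $\phi_{N_x+1,j}=\phi_{N_x,j}$, $\phi_{i,0}=\phi_{i,1}$, $\phi_{i,N_y+1}=\phi_{i,N_y}$, and let $\nabla_h^4=\Delta_h\Delta_h$. Let $n\ge1$ and let grid functions $\phi^{n-1},\phi^n,q^{n-1},q^n$ and a grid function $\bar M^{n+1/2}$ with $\langle\bar M^{n+1/2},1\rangle\ne0$ be given; set $\bar{q'}^{\,n+1/2}=\tfrac32(2\phi^n)-\tfrac12(2\phi^{n-1})$ (pointwise). Suppose grid functions $\phi^{n+1},q^{n+1}$ satisfy $$\phi^{n+1}-\phi^n=-\Delta t\,\bar M^{n+1/2}\big(\mu^{n+1/2}-L^{n+1/2}\big),\qquad q^{n+1}-q^n=\bar{q'}^{\,n+1/2}(\phi^{n+1}-\phi^n),$$ (products of grid functions taken pointwise), where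 $(\bullet)^{n+1/2}=\tfrac12[(\bullet)^{n+1}+(\bullet)^n]$, $$\mu^{n+1/2}=(\nabla_h^4\phi+2a\nabla_h^2\phi+\alpha\phi)^{n+1/2}+\tfrac12q^{n+1/2}\bar{q'}^{\,n+1/2},\qquad L^{n+1/2}=\frac{\langle\bar M^{n+1/2},\mu^{n+1/2}\rangle}{\langle\bar M^{n+1/2},1\rangle}.$$ Define the discrete energy $F^k=\big\langle\tfrac{\phi^k}{2}(\nabla_h^4+2a\nabla_h^2+\alpha)\phi^k+\tfrac{(q^k)^2}{4},1\big\rangle$. Then $$F^{n+1}-F^n=-\Delta t\,\big\langle\mu^{n+1/2}-L^{n+1/2},\,\bar M^{n+1/2}(\mu^{n+1/2}-L^{n+1/2})\big\rangle.$$
   Context: This is the fully discrete (finite-difference in space, linear Crank–Nicolson/extrapolation in time, energy quadratization $q=\phi^2$, $q'=2\phi$) scheme for the Allen–Cahn equation with a Lagrange multiplier enforcing mass conservation, for the phase-field crystal free energy $\int[\tfrac12|\nabla^2\phi|^2-a|\nabla\phi|^2+\tfrac\alpha2\phi^2+\tfrac14\phi^4]$. $\bar M^{n+1/2}$ represents the extrapolated mobility $\tfrac32M^n-\tfrac12M^{n-1}$. *)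

theory Defs
  imports Main "HOL.Real"
begin

type_synonym grid = "nat \<Rightarrow> nat \<Rightarrow> real"

text \<open>Grid functions are indexed by 1 \<le> i \<le> Nx, 1 \<le> j \<le> Ny; values outside are irrelevant.\<close>

definition ginner :: "nat \<Rightarrow> nat \<Rightarrow> real \<Rightarrow> real \<Rightarrow> grid \<Rightarrow> grid \<Rightarrow> real" where
  "ginner Nx Ny hx hy f g = hx * hy * (\<Sum>i\<in>{1..Nx}. \<Sum>j\<in>{1..Ny}. f i j * g i j)"

text \<open>Value with homogeneous Neumann ghost cells: index 0 reflects to 1, index N+1 to N.\<close>
definition ghost :: "nat \<Rightarrow> nat \<Rightarrow> grid \<Rightarrow> nat \<Rightarrow> nat \<Rightarrow> real" where
  "ghost Nx Ny f i j =
     f (if i = 0 then 1 else if i = Nx + 1 then Nx else i)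
       (if j = 0 then 1 else if j = Ny + 1 then Ny else j)"

definition lap :: "nat \<Rightarrow> nat \<Rightarrow> real \<Rightarrow> real \<Rightarrow> grid \<Rightarrow> grid" where
  "lap Nx Ny hx hy f = (\<lambda>i j.
     (ghost Nx Ny f (i + 1) j - 2 * f i j + ghost Nx Ny f (i - 1) j) / hx\<^sup>2
   + (ghost Nx Ny f i (j + 1) - 2 * f i j + ghost Nx Ny f i (j - 1)) / hy\<^sup>2)"

definition bilap :: "nat \<Rightarrow> nat \<Rightarrow> real \<Rightarrow> real \<Rightarrow> grid \<Rightarrow> grid" where
  "bilap Nx Ny hx hy f = lap Nx Ny hx hy (lap Nx Ny hx hy f)"

definition Lop :: "nat \<Rightarrow> nat \<Rightarrow> real \<Rightarrow> real \<Rightarrow> real \<Rightarrow> real \<Rightarrow> grid \<Rightarrow> grid" where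
  "Lop Nx Ny hx hy a \<alpha> f = (\<lambda>i j. bilap Nx Ny hx hy f i j + 2 * a * lap Nx Ny hx hy f i j + \<alpha> * f i j)"

definition energy :: "nat \<Rightarrow> nat \<Rightarrow> real \<Rightarrow> real \<Rightarrow> real \<Rightarrow> real \<Rightarrow> grid \<Rightarrow> grid \<Rightarrow> real" where
  "energy Nx Ny hx hy a \<alpha> \<phi> q =
     ginner Nx Ny hx hy (\<lambda>i j. \<phi> i j / 2 * Lop Nx Ny hx hy a \<alpha> \<phi> i j + (q i j)\<^sup>2 / 4) (\<lambda>_ _. 1)"

end

theory Submission imports Defs begin

lemma sum1d:
  fixes u v :: "nat \<Rightarrow> real" and N :: nat
  assumes "N \<ge> 1"
  shows "(\<Sum>i\<in>{1..N}. u i * (v (if i = N then N else i+1) - 2 * v i + v (if i = 1 then 1 else i - 1)))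
       = (\<Sum>i\<in>{1..N}. v i * (u (if i = N then N else i+1) - 2 * u i + u (if i = 1 then 1 else i - 1)))"
proof -
  have A: "(\<Sum>i\<in>{1..N}. u i * v (if i = N then N else i+1)) = (\<Sum>i\<in>{1..<N}. u i * v (i+1)) + u N * v N" for u v :: "nat \<Rightarrow> real"
  proof -
    have "{1..N} = insert N {1..<N}" using assms by auto
    then have "(\<Sum>i\<in>{1..N}. u i * v (if i = N then N else i+1)) = u N * v N + (\<Sum>i\<in>{1..<N}. u i * v (if i = N then N else i+1))"
      by simp
    also have "(\<Sum>i\<in>{1..<N}. u i * v (if i = N then N else i+1)) = (\<Sum>i\<in>{1..<N}. u i * v (i+1))"
      by (rule sum.cong) auto
    finally show ?thesis by simp
  qed
  have B: "(\<Sum>i\<in>{1..N}. u i * v (if i = 1 then 1 else i - 1)) = (\<Sum>i\<in>{1..<N}. u (i+1) * v i) + u 1 * v 1" for u v :: "nat \<Rightarrow> real"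
  proof -
    have "{1..N} = insert 1 {2..N}" using assms by auto
    then have "(\<Sum>i\<in>{1..N}. u i * v (if i = 1 then 1 else i - 1)) = u 1 * v 1 + (\<Sum>i\<in>{2..N}. u i * v (if i = 1 then 1 else i - 1))"
      by simp
    also have "(\<Sum>i\<in>{2..N}. u i * v (if i = 1 then 1 else i - 1)) = (\<Sum>i\<in>{2..N}. u i * v (i - 1))"
      by (rule sum.cong) auto
    also have "\<dots> = (\<Sum>i\<in>{1..<N}. u (i+1) * v i)"
    proof -
      have e1: "{2..N} = {Suc 1..Suc (N-1)}" and e2: "{1..<N} = {1..N-1}" using assms by auto
      show ?thesis unfolding e1 e2 sum.shift_bounds_cl_Suc_ivl by simp
    qed
    finally show ?thesis by simp
  qed
  have C: "(\<Sum>i\<in>{1..N}. u i * (v (if i = N then N else i+1) - 2 * v i + v (if i = 1 then 1 else i - 1)))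
     = (\<Sum>i\<in>{1..N}. u i * v (if i = N then N else i+1)) + (\<Sum>i\<in>{1..N}. u i * v (if i = 1 then 1 else i - 1)) - 2 * (\<Sum>i\<in>{1..N}. u i * v i)"
    for u v :: "nat \<Rightarrow> real"
    by (simp add: algebra_simps sum.distrib sum_subtractf sum_distrib_left)
  show ?thesis unfolding C A B
    by (simp add: algebra_simps sum.distrib)
qed
definition gs :: "nat \<Rightarrow> nat \<Rightarrow> grid \<Rightarrow> grid \<Rightarrow> real" where
  "gs Nx Ny f g = (\<Sum>i\<in>{1..Nx}. \<Sum>j\<in>{1..Ny}. f i j * g i j)"

definition Xd :: "nat \<Rightarrow> grid \<Rightarrow> grid" where
  "Xd Nx f = (\<lambda>i j. f (if i = Nx then Nx else i+1) j - 2 * f i j + f (if i = 1 then 1 else i - 1) j)"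
definition Yd :: "nat \<Rightarrow> grid \<Rightarrow> grid" where
  "Yd Ny f = (\<lambda>i j. f i (if j = Ny then Ny else j+1) - 2 * f i j + f i (if j = 1 then 1 else j - 1))"

lemma lap_in:
  assumes "1 \<le> i" "i \<le> Nx" "1 \<le> j" "j \<le> Ny"
  shows "lap Nx Ny hx hy f i j = Xd Nx f i j / hx\<^sup>2 + Yd Ny f i j / hy\<^sup>2"
  using assms unfolding lap_def ghost_def Xd_def Yd_def by auto

lemma lap_sym:
  assumes "Nx \<ge> 1" "Ny \<ge> 1"
  shows "gs Nx Ny f (lap Nx Ny hx hy g) = gs Nx Ny g (lap Nx Ny hx hy f)"
proof -
  have E: "gs Nx Ny f (lap Nx Ny hx hy g) =
     (\<Sum>j\<in>{1..Ny}. \<Sum>i\<in>{1..Nx}. f i j * Xd Nx g i j) / hx\<^sup>2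
   + (\<Sum>i\<in>{1..Nx}. \<Sum>j\<in>{1..Ny}. f i j * Yd Ny g i j) / hy\<^sup>2" for f g
  proof -
    have "gs Nx Ny f (lap Nx Ny hx hy g) = (\<Sum>i\<in>{1..Nx}. \<Sum>j\<in>{1..Ny}.
        f i j * Xd Nx g i j / hx\<^sup>2 + f i j * Yd Ny g i j / hy\<^sup>2)"
      unfolding gs_def by (intro sum.cong refl) (simp add: lap_in ring_distribs)
    also have "\<dots> = (\<Sum>i\<in>{1..Nx}. \<Sum>j\<in>{1..Ny}. f i j * Xd Nx g i j) / hx\<^sup>2
       + (\<Sum>i\<in>{1..Nx}. \<Sum>j\<in>{1..Ny}. f i j * Yd Ny g i j) / hy\<^sup>2"
      by (simp add: sum.distrib sum_divide_distrib)
    also have "(\<Sum>i\<in>{1..Nx}. \<Sum>j\<in>{1..Ny}. f i j * Xd Nx g i j) = (\<Sum>j\<in>{1..Ny}. \<Sum>i\<in>{1..Nx}. f i j * Xd Nx g i j)"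
      by (rule sum.swap)
    finally show ?thesis .
  qed
  have X: "(\<Sum>i\<in>{1..Nx}. f i j * Xd Nx g i j) = (\<Sum>i\<in>{1..Nx}. g i j * Xd Nx f i j)" for j
    unfolding Xd_def using sum1d[OF assms(1), of "\<lambda>i. f i j" "\<lambda>i. g i j"] by simp
  have Y: "(\<Sum>j\<in>{1..Ny}. f i j * Yd Ny g i j) = (\<Sum>j\<in>{1..Ny}. g i j * Yd Ny f i j)" for i
    unfolding Yd_def using sum1d[OF assms(2), of "\<lambda>j. f i j" "\<lambda>j. g i j"] by simp
  show ?thesis unfolding E X Y ..
qed

lemma gs_comm: "gs Nx Ny f g = gs Nx Ny g f"
  unfolding gs_def by (simp add: mult.commute)

lemma gs_lin: "gs Nx Ny f (\<lambda>i j. A i j + c * B i j + d * C i j) = gs Nx Ny f A + c * gs Nx Ny f B + d * gs Nx Ny f C"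
  unfolding gs_def by (simp add: sum.distrib sum_distrib_left algebra_simps)

lemma Lop_sym:
  assumes "Nx \<ge> 1" "Ny \<ge> 1"
  shows "gs Nx Ny f (Lop Nx Ny hx hy a \<alpha> g) = gs Nx Ny g (Lop Nx Ny hx hy a \<alpha> f)"
proof -
  have B: "gs Nx Ny f (bilap Nx Ny hx hy g) = gs Nx Ny g (bilap Nx Ny hx hy f)" for f g
    unfolding bilap_def using lap_sym[OF assms] gs_comm by metis
  show ?thesis unfolding Lop_def gs_lin B lap_sym[OF assms, of f] gs_comm[of _ _ f g] ..
qed

lemma lap_avg: "lap Nx Ny hx hy (\<lambda>i j. (p i j + q i j) / 2) = (\<lambda>i j. (lap Nx Ny hx hy p i j + lap Nx Ny hx hy q i j) / 2)"
  proof (intro ext)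
  fix i j
  have k: "((a1 + b1) / 2 - 2 * ((c1 + d1) / 2) + (e1 + f1) / 2) / h + ((a2 + b2) / 2 - 2 * ((c1 + d1) / 2) + (e2 + f2) / 2) / k
     = ((a1 - 2 * c1 + e1) / h + (a2 - 2 * c1 + e2) / k + ((b1 - 2 * d1 + f1) / h + (b2 - 2 * d1 + f2) / k)) / 2"
    for a1 b1 c1 d1 e1 f1 a2 b2 e2 f2 h k :: real
    by (simp add: add_divide_distrib diff_divide_distrib)
  show "lap Nx Ny hx hy (\<lambda>i j. (p i j + q i j) / 2) i j = (lap Nx Ny hx hy p i j + lap Nx Ny hx hy q i j) / 2"
    unfolding lap_def ghost_def by (rule k)
qed

lemma Lop_avg: "Lop Nx Ny hx hy a \<alpha> (\<lambda>i j. (p i j + q i j) / 2) i j = (Lop Nx Ny hx hy a \<alpha> p i j + Lop Nx Ny hx hy a \<alpha> q i j) / 2"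
  unfolding Lop_def bilap_def lap_avg by (simp add: field_simps)

lemma ginner_gs: "ginner Nx Ny hx hy f g = hx * hy * gs Nx Ny f g"
  unfolding ginner_def gs_def ..

theorem theorem4p3:
  fixes a \<alpha> dt hx hy :: real
    and Nx Ny n :: nat
    and \<phi>m \<phi>n \<phi>p qm qn qp Mbar :: grid
    and qbar \<phi>h qh \<mu> :: grid
    and L :: real
  assumes "dt > 0" and "hx > 0" and "hy > 0" and "Nx \<ge> 1" and "Ny \<ge> 1" and "n \<ge> 1"
    and "ginner Nx Ny hx hy Mbar (\<lambda>_ _. 1) \<noteq> 0"
    and qbar_def: "qbar = (\<lambda>i j. 3/2 * (2 * \<phi>n i j) - 1/2 * (2 * \<phi>m i j))"
    and \<phi>h_def: "\<phi>h = (\<lambda>i j. (\<phi>p i j + \<phi>n i j) / 2)"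
    and qh_def: "qh = (\<lambda>i j. (qp i j + qn i j) / 2)"
    and \<mu>_def: "\<mu> = (\<lambda>i j. Lop Nx Ny hx hy a \<alpha> \<phi>h i j + 1/2 * qh i j * qbar i j)"
    and L_def: "L = ginner Nx Ny hx hy Mbar \<mu> / ginner Nx Ny hx hy Mbar (\<lambda>_ _. 1)"
    and phi_eq: "\<forall>i\<in>{1..Nx}. \<forall>j\<in>{1..Ny}. \<phi>p i j - \<phi>n i j = - dt * Mbar i j * (\<mu> i j - L)"
    and q_eq: "\<forall>i\<in>{1..Nx}. \<forall>j\<in>{1..Ny}. qp i j - qn i j = qbar i j * (\<phi>p i j - \<phi>n i j)"
  shows "energy Nx Ny hx hy a \<alpha> \<phi>p qp - energy Nx Ny hx hy a \<alpha> \<phi>n qn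
         = - dt * ginner Nx Ny hx hy (\<lambda>i j. \<mu> i j - L) (\<lambda>i j. Mbar i j * (\<mu> i j - L))"
proof -
  define P where "P = Lop Nx Ny hx hy a \<alpha> \<phi>p"
  define Q where "Q = Lop Nx Ny hx hy a \<alpha> \<phi>n"
  have sym: "gs Nx Ny \<phi>p Q = gs Nx Ny \<phi>n P"
    unfolding P_def Q_def using Lop_sym[OF assms(4,5)] by blast
  have en: "energy Nx Ny hx hy a \<alpha> f g = hx * hy * (\<Sum>i\<in>{1..Nx}. \<Sum>j\<in>{1..Ny}. f i j / 2 * Lop Nx Ny hx hy a \<alpha> f i j + (g i j)\<^sup>2 / 4)" for f g
    unfolding energy_def ginner_def by simp
  have mu_ij: "\<mu> i j = (P i j + Q i j) / 2 + (qp i j + qn i j) / 4 * qbar i j" for i j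
    unfolding \<mu>_def \<phi>h_def qh_def P_def Q_def Lop_avg by simp
  have pw: "(\<phi>p i j / 2 * P i j + (qp i j)\<^sup>2 / 4) - (\<phi>n i j / 2 * Q i j + (qn i j)\<^sup>2 / 4)
      = - dt * Mbar i j * (\<mu> i j - L) * \<mu> i j + (\<phi>n i j * P i j - \<phi>p i j * Q i j) / 2"
    if "i \<in> {1..Nx}" "j \<in> {1..Ny}" for i j
  proof -
    have d: "\<phi>p i j - \<phi>n i j = - dt * Mbar i j * (\<mu> i j - L)" using phi_eq that by blast
    have qq: "qp i j - qn i j = qbar i j * (\<phi>p i j - \<phi>n i j)" using q_eq that by blast
    have qq2: "qp i j = qn i j + qbar i j * (\<phi>p i j - \<phi>n i j)" using qq by simp
    have "(\<phi>p i j / 2 * P i j + (qp i j)\<^sup>2 / 4) - (\<phi>n i j / 2 * Q i j + (qn i j)\<^sup>2 / 4)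
      = (\<phi>p i j - \<phi>n i j) * \<mu> i j + (\<phi>n i j * P i j - \<phi>p i j * Q i j) / 2"
      unfolding mu_ij qq2 by (simp add: power2_eq_square algebra_simps add_divide_distrib diff_divide_distrib)
    have "True"
    proof -
      have "(qp i j)\<^sup>2 - (qn i j)\<^sup>2 = (qp i j - qn i j) * (qp i j + qn i j)" by (simp add: power2_eq_square algebra_simps)
      then have "(qp i j)\<^sup>2 - (qn i j)\<^sup>2 = qbar i j * (\<phi>p i j - \<phi>n i j) * (qp i j + qn i j)" using qq by simp
      then show True by simp
    qed
    from \<open>_ = (\<phi>p i j - \<phi>n i j) * \<mu> i j + _\<close> show ?thesis using d by simp
  qed
  have S0: "(\<Sum>i\<in>{1..Nx}. \<Sum>j\<in>{1..Ny}. Mbar i j * (\<mu> i j - L)) = 0"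
  proof -
    have nz: "gs Nx Ny Mbar (\<lambda>_ _. 1) \<noteq> 0" using assms(7) unfolding ginner_gs by simp
    have L2: "L = gs Nx Ny Mbar \<mu> / gs Nx Ny Mbar (\<lambda>_ _. 1)"
      unfolding L_def ginner_gs using assms(2,3) by simp
    have "(\<Sum>i\<in>{1..Nx}. \<Sum>j\<in>{1..Ny}. Mbar i j * (\<mu> i j - L)) = gs Nx Ny Mbar \<mu> - L * gs Nx Ny Mbar (\<lambda>_ _. 1)"
      unfolding gs_def by (simp add: algebra_simps sum_subtractf sum_distrib_left)
    also have "\<dots> = 0" using nz L2 by simp
    finally show ?thesis .
  qed
  have "energy Nx Ny hx hy a \<alpha> \<phi>p qp - energy Nx Ny hx hy a \<alpha> \<phi>n qn
     = hx * hy * (\<Sum>i\<in>{1..Nx}. \<Sum>j\<in>{1..Ny}. (\<phi>p i j / 2 * P i j + (qp i j)\<^sup>2 / 4) - (\<phi>n i j / 2 * Q i j + (qn i j)\<^sup>2 / 4))"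
    unfolding en P_def Q_def by (simp add: sum_subtractf right_diff_distrib)
  also have "\<dots> = hx * hy * (\<Sum>i\<in>{1..Nx}. \<Sum>j\<in>{1..Ny}. - dt * Mbar i j * (\<mu> i j - L) * \<mu> i j + (\<phi>n i j * P i j - \<phi>p i j * Q i j) / 2)"
    using pw by (intro arg_cong[where f="\<lambda>x. hx * hy * x"] sum.cong refl) auto
  also have "\<dots> = hx * hy * ((\<Sum>i\<in>{1..Nx}. \<Sum>j\<in>{1..Ny}. - dt * Mbar i j * (\<mu> i j - L) * \<mu> i j) + (gs Nx Ny \<phi>n P - gs Nx Ny \<phi>p Q) / 2)"
  proof -
    have 1: "(\<Sum>i\<in>{1..Nx}. \<Sum>j\<in>{1..Ny}. - dt * Mbar i j * (\<mu> i j - L) * \<mu> i j + (\<phi>n i j * P i j - \<phi>p i j * Q i j) / 2)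
      = (\<Sum>i\<in>{1..Nx}. \<Sum>j\<in>{1..Ny}. - dt * Mbar i j * (\<mu> i j - L) * \<mu> i j) + (\<Sum>i\<in>{1..Nx}. \<Sum>j\<in>{1..Ny}. (\<phi>n i j * P i j - \<phi>p i j * Q i j) / 2)"
      by (simp only: sum.distrib)
    have 2: "(\<Sum>i\<in>{1..Nx}. \<Sum>j\<in>{1..Ny}. (\<phi>n i j * P i j - \<phi>p i j * Q i j) / 2) = (gs Nx Ny \<phi>n P - gs Nx Ny \<phi>p Q) / 2"
      unfolding gs_def by (simp only: sum_divide_distrib[symmetric] sum_subtractf)
    show ?thesis unfolding 1 2 ..
  qed
  also have "\<dots> = hx * hy * (\<Sum>i\<in>{1..Nx}. \<Sum>j\<in>{1..Ny}. - dt * Mbar i j * (\<mu> i j - L) * \<mu> i j)"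
    using sym by simp
  also have "\<dots> = hx * hy * (- dt * (\<Sum>i\<in>{1..Nx}. \<Sum>j\<in>{1..Ny}. Mbar i j * ((\<mu> i j - L) * \<mu> i j)))"
    by (simp only: sum_distrib_left mult.assoc)
  also have "(\<Sum>i\<in>{1..Nx}. \<Sum>j\<in>{1..Ny}. Mbar i j * ((\<mu> i j - L) * \<mu> i j))
     = (\<Sum>i\<in>{1..Nx}. \<Sum>j\<in>{1..Ny}. (\<mu> i j - L) * (Mbar i j * (\<mu> i j - L)))"
  proof -
    have "(\<Sum>i\<in>{1..Nx}. \<Sum>j\<in>{1..Ny}. (\<mu> i j - L) * (Mbar i j * (\<mu> i j - L)))
      = (\<Sum>i\<in>{1..Nx}. \<Sum>j\<in>{1..Ny}. Mbar i j * ((\<mu> i j - L) * \<mu> i j) - L * (Mbar i j * (\<mu> i j - L)))"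
      by (intro sum.cong refl) (simp add: algebra_simps)
    also have "\<dots> = (\<Sum>i\<in>{1..Nx}. \<Sum>j\<in>{1..Ny}. Mbar i j * ((\<mu> i j - L) * \<mu> i j)) - L * (\<Sum>i\<in>{1..Nx}. \<Sum>j\<in>{1..Ny}. Mbar i j * (\<mu> i j - L))"
      by (simp only: sum_subtractf sum_distrib_left)
    finally show ?thesis using S0 by simp
  qed
  also have "hx * hy * (- dt * (\<Sum>i\<in>{1..Nx}. \<Sum>j\<in>{1..Ny}. (\<mu> i j - L) * (Mbar i j * (\<mu> i j - L))))
     = - dt * ginner Nx Ny hx hy (\<lambda>i j. \<mu> i j - L) (\<lambda>i j. Mbar i j * (\<mu> i j - L))"
    unfolding ginner_def by simp
  finally show ?thesis .
qed

end
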